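(* Let $n\ge1$ and $1\le k\le n$. With $F_k$, $\Omega$ and $\mathcal I$ as in the context, $\Omega F_k\equiv\big(4nk-2k(k-1)\big)F_k\pmod{\mathcal I}$.
   Context: Let $\mathbb C[\mathrm{Mat}_{2n}^{\mathbb R}]$ be the ring of complex polynomials in the real and imaginary parts of the entries of $Z=(z_{a,b})\in M_{2n}(\mathbb C)$, viewed as polynomials in $z_{a,b},\bar z_{a,b}$. For $1\le j,l\le 2n$, $\Phi_{jl}=\sum_{i=1}^n z_{j,i}\bar z_{l,i}$, and $F_k=\sum_{s}\mathrm{sgn}(s)\,\Phi_{1,s(1)+1}\Phi_{3,s(3)+1}\cdots\Phi_{2k-1,s(2k-1)+1}$, where $s$ runs over the permutations of $\{1,3,\dots,2k-1\}$. $\mathcal I$ is the kernel of restriction to $\mathrm U_{2n}$; $P_1\equiv P_2\pmod{\mathcal I}$ means they agree on $\mathrm U_{2n}$. For $1\le\alpha,\beta\le 2n$ let $E_{\alpha\beta}$ act by $\sum_{\gamma=1}^{2n}\big(z_{\gamma,\alpha}\frac{\partial}{\partial z_{\gamma,\beta}}-\bar z_{\gamma,\beta}\frac{\partial}{\partial\bar z_{\gamma,\alpha}}\big)$, $H_\gamma=E_{\gamma\gamma}$, and $\Omega=\sum_{\gamma}H_\gamma^2+\sum_{\alpha<\beta}(E_{\alpha\beta}E_{\beta\alpha}+E_{\beta\alpha}E_{\alpha\beta})$. *)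

theory Defs
  imports "HOL-Analysis.Analysis" "HOL-Combinatorics.Permutations"
begin

text \<open>Matrices Z in M_{2n}(C) are functions of 1-based indices; only entries with
indices in 1..2n are used. Polynomials in z, conj z are represented by the
functions they induce on matrices.\<close>

type_synonym cmat = "nat \<Rightarrow> nat \<Rightarrow> complex"

definition Phi :: "nat \<Rightarrow> nat \<Rightarrow> nat \<Rightarrow> cmat \<Rightarrow> complex" where
  "Phi n j l Z = (\<Sum>i=1..n. Z j i * cnj (Z l i))"

definition oddset :: "nat \<Rightarrow> nat set" where
  "oddset k = (\<lambda>i. 2*i+1) ` {..<k}"

definition Fk :: "nat \<Rightarrow> nat \<Rightarrow> cmat \<Rightarrow> complex" where
  "Fk n k Z = (\<Sum>s\<in>{s. s permutes oddset k}.
      of_int (sign s) * (\<Prod>m\<in>oddset k. Phi n m (s m + 1) Z))"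

definition upd_entry :: "cmat \<Rightarrow> nat \<Rightarrow> nat \<Rightarrow> complex \<Rightarrow> cmat" where
  "upd_entry Z a b w = Z(a := (Z a)(b := w))"

definition d_re :: "nat \<Rightarrow> nat \<Rightarrow> (cmat \<Rightarrow> complex) \<Rightarrow> cmat \<Rightarrow> complex" where
  "d_re a b f Z = vector_derivative (\<lambda>t::real. f (upd_entry Z a b (Z a b + of_real t))) (at 0)"

definition d_im :: "nat \<Rightarrow> nat \<Rightarrow> (cmat \<Rightarrow> complex) \<Rightarrow> cmat \<Rightarrow> complex" where
  "d_im a b f Z = vector_derivative (\<lambda>t::real. f (upd_entry Z a b (Z a b + of_real t * \<i>))) (at 0)"

definition dz :: "nat \<Rightarrow> nat \<Rightarrow> (cmat \<Rightarrow> complex) \<Rightarrow> cmat \<Rightarrow> complex" where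
  "dz a b f Z = (d_re a b f Z - \<i> * d_im a b f Z) / 2"

definition dzb :: "nat \<Rightarrow> nat \<Rightarrow> (cmat \<Rightarrow> complex) \<Rightarrow> cmat \<Rightarrow> complex" where
  "dzb a b f Z = (d_re a b f Z + \<i> * d_im a b f Z) / 2"

definition Eop :: "nat \<Rightarrow> nat \<Rightarrow> nat \<Rightarrow> (cmat \<Rightarrow> complex) \<Rightarrow> cmat \<Rightarrow> complex" where
  "Eop n \<alpha> \<beta> f Z = (\<Sum>\<gamma>=1..2*n.
      Z \<gamma> \<alpha> * dz \<gamma> \<beta> f Z - cnj (Z \<gamma> \<beta>) * dzb \<gamma> \<alpha> f Z)"

definition Hop :: "nat \<Rightarrow> nat \<Rightarrow> (cmat \<Rightarrow> complex) \<Rightarrow> cmat \<Rightarrow> complex" where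
  "Hop n \<gamma> = Eop n \<gamma> \<gamma>"

definition Omega :: "nat \<Rightarrow> (cmat \<Rightarrow> complex) \<Rightarrow> cmat \<Rightarrow> complex" where
  "Omega n f Z = (\<Sum>\<gamma>=1..2*n. Hop n \<gamma> (Hop n \<gamma> f) Z)
     + (\<Sum>(\<alpha>,\<beta>)\<in>{(\<alpha>,\<beta>). \<alpha> \<in> {1..2*n} \<and> \<beta> \<in> {1..2*n} \<and> \<alpha> < \<beta>}.
          Eop n \<alpha> \<beta> (Eop n \<beta> \<alpha> f) Z + Eop n \<beta> \<alpha> (Eop n \<alpha> \<beta> f) Z)"

definition unitary_mat :: "nat \<Rightarrow> cmat \<Rightarrow> bool" where
  "unitary_mat m U \<longleftrightarrow> (\<forall>a\<in>{1..m}. \<forall>b\<in>{1..m}.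
      (\<Sum>c=1..m. U a c * cnj (U b c)) = (if a = b then 1 else 0))"

end

theory Submission
  imports Defs
begin

definition hasW :: "(cmat \<Rightarrow> complex) \<Rightarrow> nat \<Rightarrow> nat \<Rightarrow> (cmat \<Rightarrow> complex) \<Rightarrow> (cmat \<Rightarrow> complex) \<Rightarrow> bool" where
  "hasW f a b D Db \<longleftrightarrow> (\<forall>Z h. ((\<lambda>t::real. f (upd_entry Z a b (Z a b + of_real t * h)))
      has_vector_derivative (D Z * h + Db Z * cnj h)) (at 0))"

lemma upd_entry_0[simp]: "upd_entry Z a b (Z a b + of_real 0 * h) = Z"
  by (simp add: upd_entry_def)

lemma upd_entry_same[simp]: "upd_entry Z a b (Z a b) = Z"
  by (simp add: upd_entry_def)

lemma hasW_dz:
  assumes "hasW f a b D Db"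
  shows "dz a b f Z = D Z" "dzb a b f Z = Db Z"
proof -
  have 1: "d_re a b f Z = D Z + Db Z"
    using assms[unfolded hasW_def, rule_format, of Z 1]
    unfolding d_re_def by (simp add: vector_derivative_at)
  have 2: "d_im a b f Z = D Z * \<i> - Db Z * \<i>"
    using assms[unfolded hasW_def, rule_format, of Z "\<i>"]
    unfolding d_im_def by (simp add: vector_derivative_at)
  show "dz a b f Z = D Z" unfolding dz_def 1 2 by (simp add: algebra_simps)
  show "dzb a b f Z = Db Z" unfolding dzb_def 1 2 by (simp add: algebra_simps)
qed

definition smooth :: "(cmat \<Rightarrow> complex) \<Rightarrow> bool" where
  "smooth f \<longleftrightarrow> (\<forall>a b. \<exists>D Db. hasW f a b D Db)"

lemma smooth_hasW: "smooth f \<Longrightarrow> hasW f a b (dz a b f) (dzb a b f)"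
proof -
  assume "smooth f"
  then obtain D Db where h: "hasW f a b D Db" unfolding smooth_def by blast
  have "dz a b f = D" "dzb a b f = Db" using hasW_dz[OF h] by auto
  thus ?thesis using h by simp
qed

lemma hasW_const: "hasW (\<lambda>Z. c) a b (\<lambda>Z. 0) (\<lambda>Z. 0)"
  unfolding hasW_def by simp

lemma hasW_add: "hasW f a b D Db \<Longrightarrow> hasW g a b D' Db' \<Longrightarrow>
   hasW (\<lambda>Z. f Z + g Z) a b (\<lambda>Z. D Z + D' Z) (\<lambda>Z. Db Z + Db' Z)"
  unfolding hasW_def
  by (auto intro!: has_vector_derivative_eq_rhs[OF has_vector_derivative_add] simp: algebra_simps)

lemma hasW_mult: "hasW f a b D Db \<Longrightarrow> hasW g a b D' Db' \<Longrightarrow>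
   hasW (\<lambda>Z. f Z * g Z) a b (\<lambda>Z. D Z * g Z + f Z * D' Z) (\<lambda>Z. Db Z * g Z + f Z * Db' Z)"
  unfolding hasW_def
  by (auto intro!: has_vector_derivative_eq_rhs[OF has_vector_derivative_mult] simp: algebra_simps)

lemma hasW_entry: "hasW (\<lambda>Z. Z c d) a b (\<lambda>Z. if c = a \<and> d = b then 1 else 0) (\<lambda>Z. 0)"
  unfolding hasW_def
proof (intro allI)
  fix Z h
  show "((\<lambda>t::real. upd_entry Z a b (Z a b + of_real t * h) c d) has_vector_derivative
      (if c = a \<and> d = b then 1 else 0) * h + 0 * cnj h) (at 0)"
  proof (cases "c = a \<and> d = b")
    case True
    then show ?thesis unfolding upd_entry_def
      by (auto intro!: derivative_eq_intros)
  next
    case False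
    have eq: "(\<lambda>t::real. upd_entry Z a b (Z a b + of_real t * h) c d) = (\<lambda>t. Z c d)"
      using False unfolding upd_entry_def by auto
    have e: "(if c = a \<and> d = b then 1 else 0) * h + 0 * cnj h = (0::complex)" using False by auto
    show ?thesis unfolding e eq by simp
  qed
qed

lemma hasW_cnj_entry: "hasW (\<lambda>Z. cnj (Z c d)) a b (\<lambda>Z. 0) (\<lambda>Z. if c = a \<and> d = b then 1 else 0)"
  unfolding hasW_def
proof (intro allI)
  fix Z h
  show "((\<lambda>t::real. cnj (upd_entry Z a b (Z a b + of_real t * h) c d)) has_vector_derivative
      0 * h + (if c = a \<and> d = b then 1 else 0) * cnj h) (at 0)"
  proof (cases "c = a \<and> d = b")
    case True
    then show ?thesis unfolding upd_entry_def
      by (auto intro!: derivative_eq_intros)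
  next
    case False
    have eq: "(\<lambda>t::real. cnj (upd_entry Z a b (Z a b + of_real t * h) c d)) = (\<lambda>t. cnj (Z c d))"
      using False unfolding upd_entry_def by auto
    have e: "0 * h + (if c = a \<and> d = b then 1 else 0) * cnj h = (0::complex)" using False by auto
    show ?thesis unfolding e eq by simp
  qed
qed

lemma hasW_sum: "(\<And>i. i \<in> A \<Longrightarrow> hasW (f i) a b (D i) (Db i)) \<Longrightarrow>
   hasW (\<lambda>Z. \<Sum>i\<in>A. f i Z) a b (\<lambda>Z. \<Sum>i\<in>A. D i Z) (\<lambda>Z. \<Sum>i\<in>A. Db i Z)"
proof (induction A rule: infinite_finite_induct)
  case (infinite A)
  then show ?case using hasW_const by simp
next
  case empty
  then show ?case using hasW_const by simp
next
  case (insert x F)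
  then show ?case by (simp add: hasW_add)
qed

lemma hasW_prod: "(\<And>i. i \<in> A \<Longrightarrow> smooth (f i)) \<Longrightarrow>
   \<exists>D Db. hasW (\<lambda>Z. \<Prod>i\<in>A. f i Z) a b D Db"
proof (induction A rule: infinite_finite_induct)
  case (infinite A)
  then show ?case using hasW_const by (simp, blast)
next
  case empty
  then show ?case using hasW_const by (simp, blast)
next
  case (insert x F)
  then obtain D Db where h1: "hasW (\<lambda>Z. \<Prod>i\<in>F. f i Z) a b D Db" by auto
  have h2: "hasW (f x) a b (dz a b (f x)) (dzb a b (f x))"
    using insert smooth_hasW by auto
  note m = hasW_mult[OF h2 h1]
  have "hasW (\<lambda>Z. \<Prod>i\<in>insert x F. f i Z) a b
     (\<lambda>Z. dz a b (f x) Z * (\<Prod>i\<in>F. f i Z) + f x Z * D Z)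
     (\<lambda>Z. dzb a b (f x) Z * (\<Prod>i\<in>F. f i Z) + f x Z * Db Z)"
    using m insert(1,2) by simp
  then show ?case by blast
qed

lemma smooth_const[simp]: "smooth (\<lambda>Z. c)"
  unfolding smooth_def using hasW_const by (intro allI exI)

lemma smooth_entry[simp]: "smooth (\<lambda>Z. Z c d)"
  unfolding smooth_def using hasW_entry by (intro allI exI)

lemma smooth_cnj_entry[simp]: "smooth (\<lambda>Z. cnj (Z c d))"
  unfolding smooth_def using hasW_cnj_entry by (intro allI exI)

lemma smooth_add[simp]: assumes "smooth f" "smooth g" shows "smooth (\<lambda>Z. f Z + g Z)"
  unfolding smooth_def
proof (intro allI)
  fix a b show "\<exists>D Db. hasW (\<lambda>Z. f Z + g Z) a b D Db"
    using hasW_add[OF smooth_hasW[OF assms(1)] smooth_hasW[OF assms(2)]] by (intro exI)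
qed

lemma smooth_mult[simp]: assumes "smooth f" "smooth g" shows "smooth (\<lambda>Z. f Z * g Z)"
  unfolding smooth_def
proof (intro allI)
  fix a b show "\<exists>D Db. hasW (\<lambda>Z. f Z * g Z) a b D Db"
    using hasW_mult[OF smooth_hasW[OF assms(1)] smooth_hasW[OF assms(2)]] by (intro exI)
qed

lemma smooth_sum[simp]: assumes "\<And>i. i \<in> A \<Longrightarrow> smooth (f i)" shows "smooth (\<lambda>Z. \<Sum>i\<in>A. f i Z)"
  unfolding smooth_def
proof (intro allI)
  fix a b
  have h: "hasW (f i) a b (dz a b (f i)) (dzb a b (f i))" if "i \<in> A" for i
  proof -
    have "smooth (f i)" using that by (rule assms)
    then show ?thesis by (rule smooth_hasW)
  qed
  show "\<exists>D Db. hasW (\<lambda>Z. \<Sum>i\<in>A. f i Z) a b D Db"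
    apply (rule exI, rule exI) by (rule hasW_sum[OF h])
qed

lemma smooth_prod[simp]: assumes "\<And>i. i \<in> A \<Longrightarrow> smooth (f i)" shows "smooth (\<lambda>Z. \<Prod>i\<in>A. f i Z)"
  unfolding smooth_def
proof (intro allI)
  fix a b
  show "\<exists>D Db. hasW (\<lambda>Z. \<Prod>i\<in>A. f i Z) a b D Db" by (rule hasW_prod[OF assms])
qed

lemma dz_add: assumes "smooth f" "smooth g" shows
   "dz a b (\<lambda>Z. f Z + g Z) Z = dz a b f Z + dz a b g Z \<and>
   dzb a b (\<lambda>Z. f Z + g Z) Z = dzb a b f Z + dzb a b g Z"
  using hasW_dz[OF hasW_add[OF smooth_hasW[OF assms(1)] smooth_hasW[OF assms(2)]]] by (intro conjI)

lemma dz_mult: assumes "smooth f" "smooth g" shows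
   "dz a b (\<lambda>Z. f Z * g Z) Z = dz a b f Z * g Z + f Z * dz a b g Z \<and>
   dzb a b (\<lambda>Z. f Z * g Z) Z = dzb a b f Z * g Z + f Z * dzb a b g Z"
  using hasW_dz[OF hasW_mult[OF smooth_hasW[OF assms(1)] smooth_hasW[OF assms(2)]]] by (intro conjI)

lemma dz_sum: assumes "\<And>i. i \<in> A \<Longrightarrow> smooth (f i)" shows
   "dz a b (\<lambda>Z. \<Sum>i\<in>A. f i Z) Z = (\<Sum>i\<in>A. dz a b (f i) Z) \<and>
   dzb a b (\<lambda>Z. \<Sum>i\<in>A. f i Z) Z = (\<Sum>i\<in>A. dzb a b (f i) Z)"
proof -
  have h: "hasW (f i) a b (dz a b (f i)) (dzb a b (f i))" if "i \<in> A" for i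
  proof -
    have "smooth (f i)" using that by (rule assms)
    then show ?thesis by (rule smooth_hasW)
  qed
  from hasW_dz[OF hasW_sum[OF h]] show ?thesis by (intro conjI)
qed

lemma dz_entry: "dz a b (\<lambda>Z. Z c d) Z = (if c = a \<and> d = b then 1 else 0) \<and> dzb a b (\<lambda>Z. Z c d) Z = 0"
  using hasW_dz[OF hasW_entry] by (intro conjI)

lemma dz_cnj_entry: "dz a b (\<lambda>Z. cnj (Z c d)) Z = 0 \<and> dzb a b (\<lambda>Z. cnj (Z c d)) Z = (if c = a \<and> d = b then 1 else 0)"
  using hasW_dz[OF hasW_cnj_entry] by (intro conjI)

lemma dz_const: "dz a b (\<lambda>Z. c) Z = 0 \<and> dzb a b (\<lambda>Z. c) Z = 0"
  using hasW_dz[OF hasW_const] by (intro conjI)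



lemma Eop_add:
  assumes "smooth f" "smooth g"
  shows "Eop n \<alpha> \<beta> (\<lambda>Z. f Z + g Z) Z = Eop n \<alpha> \<beta> f Z + Eop n \<alpha> \<beta> g Z"
proof -
  have "Eop n \<alpha> \<beta> (\<lambda>Z. f Z + g Z) Z = (\<Sum>\<gamma>=1..2*n.
     (Z \<gamma> \<alpha> * dz \<gamma> \<beta> f Z - cnj (Z \<gamma> \<beta>) * dzb \<gamma> \<alpha> f Z)
     + (Z \<gamma> \<alpha> * dz \<gamma> \<beta> g Z - cnj (Z \<gamma> \<beta>) * dzb \<gamma> \<alpha> g Z))"
    unfolding Eop_def using dz_add[OF assms]
    by (intro sum.cong) (simp_all add: algebra_simps)
  also have "\<dots> = Eop n \<alpha> \<beta> f Z + Eop n \<alpha> \<beta> g Z"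
    unfolding Eop_def by (simp only: sum.distrib)
  finally show ?thesis .
qed

lemma Eop_mult:
  assumes "smooth f" "smooth g"
  shows "Eop n \<alpha> \<beta> (\<lambda>Z. f Z * g Z) Z = Eop n \<alpha> \<beta> f Z * g Z + f Z * Eop n \<alpha> \<beta> g Z"
proof -
  have "Eop n \<alpha> \<beta> (\<lambda>Z. f Z * g Z) Z = (\<Sum>\<gamma>=1..2*n.
     (Z \<gamma> \<alpha> * dz \<gamma> \<beta> f Z - cnj (Z \<gamma> \<beta>) * dzb \<gamma> \<alpha> f Z) * g Z
     + f Z * (Z \<gamma> \<alpha> * dz \<gamma> \<beta> g Z - cnj (Z \<gamma> \<beta>) * dzb \<gamma> \<alpha> g Z))"
    unfolding Eop_def using dz_mult[OF assms]
    by (intro sum.cong) (simp_all add: algebra_simps)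
  also have "\<dots> = Eop n \<alpha> \<beta> f Z * g Z + f Z * Eop n \<alpha> \<beta> g Z"
    unfolding Eop_def by (simp only: sum.distrib sum_distrib_left sum_distrib_right)
  finally show ?thesis .
qed

lemma Eop_sum:
  assumes "\<And>i. i \<in> A \<Longrightarrow> smooth (f i)"
  shows "Eop n \<alpha> \<beta> (\<lambda>Z. \<Sum>i\<in>A. f i Z) Z = (\<Sum>i\<in>A. Eop n \<alpha> \<beta> (f i) Z)"
proof -
  have "Eop n \<alpha> \<beta> (\<lambda>Z. \<Sum>i\<in>A. f i Z) Z = (\<Sum>\<gamma>=1..2*n. \<Sum>i\<in>A.
     Z \<gamma> \<alpha> * dz \<gamma> \<beta> (f i) Z - cnj (Z \<gamma> \<beta>) * dzb \<gamma> \<alpha> (f i) Z)"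
    unfolding Eop_def using dz_sum[of A f, OF assms]
    by (intro sum.cong) (simp_all add: sum_subtractf sum_distrib_left)
  also have "\<dots> = (\<Sum>i\<in>A. Eop n \<alpha> \<beta> (f i) Z)"
    unfolding Eop_def by (rule sum.swap)
  finally show ?thesis .
qed

lemma Eop_const: "Eop n \<alpha> \<beta> (\<lambda>Z. c) Z = 0"
  unfolding Eop_def using dz_const by simp

lemma Eop_cmult: "smooth f \<Longrightarrow> Eop n \<alpha> \<beta> (\<lambda>Z. c * f Z) Z = c * Eop n \<alpha> \<beta> f Z"
  using Eop_mult[of "\<lambda>Z. c" f, OF smooth_const] Eop_const[of n \<alpha> \<beta> c Z] by simp


lemma Eop_entry:
  assumes "j \<in> {1..2*n}"
  shows "Eop n \<alpha> \<beta> (\<lambda>Z. Z j i) Z = (if i = \<beta> then Z j \<alpha> else 0)"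
proof -
  have "Eop n \<alpha> \<beta> (\<lambda>Z. Z j i) Z = (\<Sum>\<gamma>\<in>{1..2*n}. (if \<gamma> = j then (if i = \<beta> then Z j \<alpha> else 0) else 0))"
    unfolding Eop_def using dz_entry by (intro sum.cong) auto
  also have "\<dots> = (if i = \<beta> then Z j \<alpha> else 0)" using assms by (simp only: sum.delta finite_atLeastAtMost if_True)
  finally show ?thesis .
qed

lemma Eop_cnj_entry:
  assumes "l \<in> {1..2*n}"
  shows "Eop n \<alpha> \<beta> (\<lambda>Z. cnj (Z l i)) Z = (if i = \<alpha> then - cnj (Z l \<beta>) else 0)"
proof -
  have "Eop n \<alpha> \<beta> (\<lambda>Z. cnj (Z l i)) Z = (\<Sum>\<gamma>\<in>{1..2*n}. (if \<gamma> = l then (if i = \<alpha> then - cnj (Z l \<beta>) else 0) else 0))"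
    unfolding Eop_def using dz_cnj_entry by (intro sum.cong) auto
  also have "\<dots> = (if i = \<alpha> then - cnj (Z l \<beta>) else 0)" using assms by (simp only: sum.delta finite_atLeastAtMost if_True)
  finally show ?thesis .
qed

lemma Eop_prod:
  assumes "finite A" "\<And>i. i \<in> A \<Longrightarrow> smooth (f i)"
  shows "Eop n \<alpha> \<beta> (\<lambda>Z. \<Prod>i\<in>A. f i Z) Z = (\<Sum>i\<in>A. Eop n \<alpha> \<beta> (f i) Z * (\<Prod>j\<in>A-{i}. f j Z))"
  using assms
proof (induction A rule: finite_induct)
  case empty
  then show ?case using Eop_const[of n \<alpha> \<beta> 1 Z] by simp
next
  case (insert x F)
  have sF: "smooth (\<lambda>Z. \<Prod>i\<in>F. f i Z)" using insert by simp
  have sx: "smooth (f x)" using insert by simp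
  have e: "(\<lambda>Z. \<Prod>i\<in>insert x F. f i Z) = (\<lambda>Z. f x Z * (\<Prod>i\<in>F. f i Z))"
    using insert by simp
  have "Eop n \<alpha> \<beta> (\<lambda>Z. \<Prod>i\<in>insert x F. f i Z) Z
      = Eop n \<alpha> \<beta> (f x) Z * (\<Prod>i\<in>F. f i Z) + f x Z * Eop n \<alpha> \<beta> (\<lambda>Z. \<Prod>i\<in>F. f i Z) Z"
    unfolding e using Eop_mult[OF sx sF] by simp
  also have "\<dots> = Eop n \<alpha> \<beta> (f x) Z * (\<Prod>i\<in>F. f i Z)
      + (\<Sum>i\<in>F. Eop n \<alpha> \<beta> (f i) Z * (\<Prod>j\<in>insert x F-{i}. f j Z))"
  proof -
    have "\<And>i. i \<in> F \<Longrightarrow> (\<Prod>j\<in>insert x F-{i}. f j Z) = f x Z * (\<Prod>j\<in>F-{i}. f j Z)"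
    proof -
      fix i assume "i \<in> F"
      then have "insert x F - {i} = insert x (F - {i})" "x \<notin> F - {i}" using insert by auto
      then show "(\<Prod>j\<in>insert x F-{i}. f j Z) = f x Z * (\<Prod>j\<in>F-{i}. f j Z)"
        using insert by simp
    qed
    then show ?thesis using insert by (simp add: sum_distrib_left algebra_simps cong: sum.cong)
  qed
  also have "\<dots> = (\<Sum>i\<in>insert x F. Eop n \<alpha> \<beta> (f i) Z * (\<Prod>j\<in>insert x F-{i}. f j Z))"
    using insert by simp
  finally show ?case .
qed



definition cc :: "nat \<Rightarrow> nat \<Rightarrow> complex" where
  "cc n x = (if x \<le> n then 1 else 0)"

lemma Phi_fun: "Phi n j l = (\<lambda>Z. \<Sum>i\<in>{1..n}. Z j i * cnj (Z l i))"
  by (rule ext) (simp add: Phi_def)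

lemma smooth_Phi[simp]: "smooth (Phi n j l)"
  unfolding Phi_fun by (intro smooth_sum smooth_mult smooth_entry smooth_cnj_entry)

lemma Eop_Phi:
  assumes "j \<in> {1..2*n}" "l \<in> {1..2*n}" "1 \<le> \<alpha>" "1 \<le> \<beta>"
  shows "Eop n \<alpha> \<beta> (Phi n j l) Z = (cc n \<beta> - cc n \<alpha>) * (Z j \<alpha> * cnj (Z l \<beta>))"
proof -
  have "Eop n \<alpha> \<beta> (Phi n j l) Z = (\<Sum>i\<in>{1..n}. Eop n \<alpha> \<beta> (\<lambda>Z. Z j i * cnj (Z l i)) Z)"
    unfolding Phi_fun by (rule Eop_sum) simp
  also have "\<dots> = (\<Sum>i\<in>{1..n}. (if i = \<beta> then Z j \<alpha> * cnj (Z l \<beta>) else 0)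
                    + (if i = \<alpha> then - (Z j \<alpha> * cnj (Z l \<beta>)) else 0))"
    by (intro sum.cong refl) (simp add: Eop_mult Eop_entry[OF assms(1)] Eop_cnj_entry[OF assms(2)])
  also have "\<dots> = (cc n \<beta> - cc n \<alpha>) * (Z j \<alpha> * cnj (Z l \<beta>))"
    using assms(3,4) by (simp add: sum.distrib cc_def algebra_simps)
  finally show ?thesis .
qed

lemma oddset_props: "m \<in> oddset k \<Longrightarrow> odd m \<and> 1 \<le> m \<and> m < 2*k"
  unfolding oddset_def by auto

lemma finite_oddset[simp]: "finite (oddset k)"
  unfolding oddset_def by simp

lemma card_oddset: "card (oddset k) = k"
  unfolding oddset_def by (subst card_image) (auto simp: inj_on_def)

lemma perm_range:
  assumes "s permutes oddset k" "m \<in> oddset k" "k \<le> n"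
  shows "m \<in> {1..2*n}" "s m + 1 \<in> {1..2*n}" "odd m" "even (s m + 1)" "s m \<in> oddset k"
proof -
  have sm: "s m \<in> oddset k" using assms(1,2) by (simp add: permutes_in_image)
  show "m \<in> {1..2*n}" "odd m" using oddset_props[OF assms(2)] assms(3) by auto
  show "s m + 1 \<in> {1..2*n}" "even (s m + 1)" using oddset_props[OF sm] assms(3) by auto
  show "s m \<in> oddset k" by (rule sm)
qed

lemma E1:
  assumes "k \<le> n" "1 \<le> \<alpha>" "1 \<le> \<beta>"
  shows "Eop n \<beta> \<alpha> (Fk n k) Z = (\<Sum>s\<in>{s. s permutes oddset k}. of_int (sign s) *
     (\<Sum>m\<in>oddset k. ((cc n \<alpha> - cc n \<beta>) * (Z m \<beta> * cnj (Z (s m + 1) \<alpha>))) *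
        (\<Prod>j\<in>oddset k - {m}. Phi n j (s j + 1) Z)))"
proof -
  have F: "Fk n k = (\<lambda>Z. \<Sum>s\<in>{s. s permutes oddset k}.
      of_int (sign s) * (\<Prod>m\<in>oddset k. Phi n m (s m + 1) Z))"
    by (rule ext) (simp add: Fk_def)
  show ?thesis unfolding F
    apply (subst Eop_sum)
     apply (simp add: smooth_prod)
    apply (intro sum.cong refl)
    apply (subst Eop_cmult)
     apply (simp add: smooth_prod)
    apply (subst Eop_prod)
      apply simp
     apply simp
    apply (intro arg_cong[where f="\<lambda>x. _ * x"] sum.cong refl)
    apply (subst Eop_Phi)
    using perm_range assms by auto
qed

lemma E2:
  assumes "k \<le> n" "1 \<le> \<alpha>" "1 \<le> \<beta>"
  shows "Eop n \<alpha> \<beta> (Eop n \<beta> \<alpha> (Fk n k)) Z = (\<Sum>s\<in>{s. s permutes oddset k}. of_int (sign s) *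
     (\<Sum>m\<in>oddset k.
        (cc n \<alpha> - cc n \<beta>) * (Z m \<alpha> * cnj (Z (s m + 1) \<alpha>) - Z m \<beta> * cnj (Z (s m + 1) \<beta>)) *
          (\<Prod>j\<in>oddset k - {m}. Phi n j (s j + 1) Z)
      + ((cc n \<alpha> - cc n \<beta>) * (Z m \<beta> * cnj (Z (s m + 1) \<alpha>))) *
          (\<Sum>m'\<in>oddset k - {m}. ((cc n \<beta> - cc n \<alpha>) * (Z m' \<alpha> * cnj (Z (s m' + 1) \<beta>))) *
             (\<Prod>j\<in>oddset k - {m} - {m'}. Phi n j (s j + 1) Z))))"
proof -
  have G: "Eop n \<beta> \<alpha> (Fk n k) = (\<lambda>Z. \<Sum>s\<in>{s. s permutes oddset k}. of_int (sign s) *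
     (\<Sum>m\<in>oddset k. ((cc n \<alpha> - cc n \<beta>) * (Z m \<beta> * cnj (Z (s m + 1) \<alpha>))) *
        (\<Prod>j\<in>oddset k - {m}. Phi n j (s j + 1) Z)))"
    by (rule ext) (rule E1[OF assms])
  show ?thesis unfolding G
    apply (subst Eop_sum)
     apply (simp add: smooth_prod)
    apply (intro sum.cong refl)
    apply (subst Eop_cmult)
     apply (simp add: smooth_prod)
    apply (intro arg_cong[where f="\<lambda>x. _ * x"])
    apply (subst Eop_sum)
     apply (simp add: smooth_prod)
    apply (intro sum.cong refl)
    apply (subst Eop_mult)
      apply (simp add: smooth_prod)
     apply (simp add: smooth_prod)
    apply (subst Eop_cmult)
     apply (simp)
    apply (subst Eop_mult)
      apply (simp)
     apply (simp)
    apply (subst Eop_prod)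
      apply simp
     apply simp
    apply (subst Eop_entry Eop_cnj_entry, use perm_range assms in blast)+
    apply (simp only: simp_thms if_True sum_distrib_left)
    apply (intro arg_cong2[where f="(+)"])
     apply (simp add: algebra_simps)
    apply (intro sum.cong refl)
    apply (subst Eop_Phi)
    using perm_range assms by (auto simp: algebra_simps)
qed



lemma L1:
  fixes c w :: "nat \<Rightarrow> complex"
  shows "(\<Sum>\<alpha>\<in>N. \<Sum>\<beta>\<in>N. (c \<alpha> - c \<beta>) * (w \<alpha> - w \<beta>))
     = 2 * of_nat (card N) * (\<Sum>\<alpha>\<in>N. c \<alpha> * w \<alpha>) - 2 * (\<Sum>\<alpha>\<in>N. c \<alpha>) * (\<Sum>\<alpha>\<in>N. w \<alpha>)"
proof -
  have e: "\<And>\<alpha> \<beta>. (c \<alpha> - c \<beta>) * (w \<alpha> - w \<beta>) = c \<alpha> * w \<alpha> + c \<beta> * w \<beta> - c \<alpha> * w \<beta> - w \<alpha> * c \<beta>"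
    by (simp add: algebra_simps)
  have x: "(\<Sum>\<alpha>\<in>N. c \<alpha> * (w \<alpha> * of_nat (card N))) = of_nat (card N) * (\<Sum>\<beta>\<in>N. c \<beta> * w \<beta>)"
    by (simp add: sum_distrib_left algebra_simps)
  show ?thesis
    unfolding e
    by (simp add: x sum.distrib sum_subtractf sum_distrib_left[symmetric] sum_distrib_right[symmetric]
        algebra_simps)
qed

lemma L2:
  fixes c A B :: "nat \<Rightarrow> complex"
  assumes "\<And>\<alpha>. c \<alpha> * c \<alpha> = c \<alpha>"
  shows "(\<Sum>\<alpha>\<in>N. \<Sum>\<beta>\<in>N. (c \<alpha> - c \<beta>) * (c \<beta> - c \<alpha>) * (A \<alpha> * B \<beta>))
     = 2 * (\<Sum>\<alpha>\<in>N. c \<alpha> * A \<alpha>) * (\<Sum>\<beta>\<in>N. c \<beta> * B \<beta>)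
       - (\<Sum>\<alpha>\<in>N. c \<alpha> * A \<alpha>) * (\<Sum>\<beta>\<in>N. B \<beta>) - (\<Sum>\<alpha>\<in>N. A \<alpha>) * (\<Sum>\<beta>\<in>N. c \<beta> * B \<beta>)"
proof -
  have e: "\<And>\<alpha> \<beta>. (c \<alpha> - c \<beta>) * (c \<beta> - c \<alpha>) * (A \<alpha> * B \<beta>)
     = 2 * ((c \<alpha> * A \<alpha>) * (c \<beta> * B \<beta>)) - (c \<alpha> * A \<alpha>) * B \<beta> - A \<alpha> * (c \<beta> * B \<beta>)"
  proof -
    fix \<alpha> \<beta>
    have "(c \<alpha> - c \<beta>) * (c \<beta> - c \<alpha>) = 2 * c \<alpha> * c \<beta> - c \<alpha> * c \<alpha> - c \<beta> * c \<beta>"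
      by (simp add: algebra_simps)
    also have "\<dots> = 2 * c \<alpha> * c \<beta> - c \<alpha> - c \<beta>" by (simp only: assms)
    finally have h: "(c \<alpha> - c \<beta>) * (c \<beta> - c \<alpha>) = 2 * c \<alpha> * c \<beta> - c \<alpha> - c \<beta>" .
    show "(c \<alpha> - c \<beta>) * (c \<beta> - c \<alpha>) * (A \<alpha> * B \<beta>)
     = 2 * ((c \<alpha> * A \<alpha>) * (c \<beta> * B \<beta>)) - (c \<alpha> * A \<alpha>) * B \<beta> - A \<alpha> * (c \<beta> * B \<beta>)"
      unfolding h by (simp add: algebra_simps)
  qed
  have "(\<Sum>\<alpha>\<in>N. \<Sum>\<beta>\<in>N. 2 * ((c \<alpha> * A \<alpha>) * (c \<beta> * B \<beta>)) - (c \<alpha> * A \<alpha>) * B \<beta> - A \<alpha> * (c \<beta> * B \<beta>))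
    = 2 * (\<Sum>\<alpha>\<in>N. \<Sum>\<beta>\<in>N. (c \<alpha> * A \<alpha>) * (c \<beta> * B \<beta>)) - (\<Sum>\<alpha>\<in>N. \<Sum>\<beta>\<in>N. (c \<alpha> * A \<alpha>) * B \<beta>)
      - (\<Sum>\<alpha>\<in>N. \<Sum>\<beta>\<in>N. A \<alpha> * (c \<beta> * B \<beta>))"
    by (simp only: sum_subtractf sum_distrib_left)
  also have "\<dots> = 2 * (\<Sum>\<alpha>\<in>N. c \<alpha> * A \<alpha>) * (\<Sum>\<beta>\<in>N. c \<beta> * B \<beta>)
       - (\<Sum>\<alpha>\<in>N. c \<alpha> * A \<alpha>) * (\<Sum>\<beta>\<in>N. B \<beta>) - (\<Sum>\<alpha>\<in>N. A \<alpha>) * (\<Sum>\<beta>\<in>N. c \<beta> * B \<beta>)"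
    by (simp only: sum_product mult.assoc)
  finally show ?thesis unfolding e .
qed



lemma omega_sum:
  fixes T :: "nat \<Rightarrow> nat \<Rightarrow> complex"
  shows "(\<Sum>\<gamma>=1..m. T \<gamma> \<gamma>) + (\<Sum>(\<alpha>,\<beta>)\<in>{(\<alpha>,\<beta>). \<alpha> \<in> {1..m} \<and> \<beta> \<in> {1..m} \<and> \<alpha> < \<beta>}. T \<alpha> \<beta> + T \<beta> \<alpha>)
     = (\<Sum>\<alpha>=1..m. \<Sum>\<beta>=1..m. T \<alpha> \<beta>)"
proof -
  define N where "N = {1..m}"
  define L where "L = {(\<alpha>,\<beta>). \<alpha> \<in> N \<and> \<beta> \<in> N \<and> \<alpha> < \<beta>}"
  define R where "R = {(\<alpha>,\<beta>). \<alpha> \<in> N \<and> \<beta> \<in> N \<and> \<beta> < \<alpha>}"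
  define D where "D = (\<lambda>\<gamma>. (\<gamma>,\<gamma>)) ` N"
  have fin: "finite N" "finite L" "finite R" "finite D"
  proof -
    show "finite N" unfolding N_def by simp
    then show "finite L" "finite R" "finite D" unfolding L_def R_def D_def
      by (auto intro: finite_subset[of _ "N \<times> N"])
  qed
  have NN: "N \<times> N = D \<union> (L \<union> R)" unfolding D_def L_def R_def by auto
  have "(\<Sum>\<alpha>\<in>N. \<Sum>\<beta>\<in>N. T \<alpha> \<beta>) = (\<Sum>p\<in>N \<times> N. T (fst p) (snd p))"
    by (simp add: sum.cartesian_product split_def)
  also have "\<dots> = (\<Sum>p\<in>D. T (fst p) (snd p)) + (\<Sum>p\<in>L. T (fst p) (snd p)) + (\<Sum>p\<in>R. T (fst p) (snd p))"
    unfolding NN using fin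
    by (subst sum.union_disjoint, simp_all, (auto simp: D_def L_def R_def)[1],
        subst sum.union_disjoint, simp_all, auto simp: L_def R_def)
  also have "(\<Sum>p\<in>D. T (fst p) (snd p)) = (\<Sum>\<gamma>\<in>N. T \<gamma> \<gamma>)"
    unfolding D_def by (subst sum.reindex) (auto simp: inj_on_def)
  also have "(\<Sum>p\<in>R. T (fst p) (snd p)) = (\<Sum>p\<in>L. T (snd p) (fst p))"
    by (rule sum.reindex_bij_witness[of _ prod.swap prod.swap]) (auto simp: L_def R_def)
  finally have "(\<Sum>\<alpha>\<in>N. \<Sum>\<beta>\<in>N. T \<alpha> \<beta>) = (\<Sum>\<gamma>\<in>N. T \<gamma> \<gamma>) + (\<Sum>p\<in>L. T (fst p) (snd p) + T (snd p) (fst p))"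
    by (simp add: sum.distrib algebra_simps)
  then show ?thesis unfolding N_def L_def by (simp add: split_def)
qed



lemma perm_swap_sum:
  fixes g :: "nat \<Rightarrow> nat \<Rightarrow> complex"
  assumes "finite S" "m \<in> S" "m' \<in> S" "m \<noteq> m'"
  shows "(\<Sum>s\<in>{s. s permutes S}. of_int (sign s) * (g m' (s m) * g m (s m') * (\<Prod>x\<in>S-{m}-{m'}. g x (s x))))
       = - (\<Sum>s\<in>{s. s permutes S}. of_int (sign s) * (\<Prod>x\<in>S. g x (s x)))"
proof -
  define \<tau> where "\<tau> = Transposition.transpose m m'"
  have 1: "g m' (s m) * g m (s m') * (\<Prod>x\<in>S-{m}-{m'}. g x (s x)) = (\<Prod>x\<in>S. g x ((s \<circ> \<tau>) x))" for s
  proof -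
    have "(\<Prod>x\<in>S. g x ((s \<circ> \<tau>) x)) = g m ((s \<circ> \<tau>) m) * (\<Prod>x\<in>S-{m}. g x ((s \<circ> \<tau>) x))"
      using assms by (simp add: prod.remove)
    also have "(\<Prod>x\<in>S-{m}. g x ((s \<circ> \<tau>) x)) = g m' ((s \<circ> \<tau>) m') * (\<Prod>x\<in>S-{m}-{m'}. g x ((s \<circ> \<tau>) x))"
      using assms by (subst prod.remove[of _ m']) auto
    also have "(\<Prod>x\<in>S-{m}-{m'}. g x ((s \<circ> \<tau>) x)) = (\<Prod>x\<in>S-{m}-{m'}. g x (s x))"
      by (rule prod.cong) (auto simp: \<tau>_def)
    finally show ?thesis by (simp add: \<tau>_def)
  qed
  have sg: "of_int (sign (s \<circ> \<tau>)) = - (of_int (sign s) :: complex)" if "s permutes S" for s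
  proof -
    have "permutation s" using that assms(1) by (rule permutes_imp_permutation[rotated])
    moreover have "permutation \<tau>" unfolding \<tau>_def by (rule permutation_swap_id)
    ultimately have "sign (s \<circ> \<tau>) = sign s * sign \<tau>" by (rule sign_compose)
    then show ?thesis using assms(4) by (simp add: \<tau>_def sign_swap_id)
  qed
  have tp: "\<tau> permutes S" unfolding \<tau>_def using assms by (simp add: permutes_swap_id)
  have "(\<Sum>s\<in>{s. s permutes S}. of_int (sign s) * (\<Prod>x\<in>S. g x ((s \<circ> \<tau>) x)))
      = (\<Sum>t\<in>{s. s permutes S}. - (of_int (sign t) * (\<Prod>x\<in>S. g x (t x))))"
  proof (rule sum.reindex_bij_witness[of _ "\<lambda>s. s \<circ> \<tau>" "\<lambda>s. s \<circ> \<tau>"])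
    fix a assume a: "a \<in> {s. s permutes S}"
    show "a \<circ> \<tau> \<circ> \<tau> = a" by (simp add: o_assoc[symmetric] \<tau>_def)
    show "a \<circ> \<tau> \<in> {s. s permutes S}" using a tp by (simp add: permutes_compose)
    show "- (of_int (sign (a \<circ> \<tau>)) * (\<Prod>x\<in>S. g x ((a \<circ> \<tau>) x))) = of_int (sign a) * (\<Prod>x\<in>S. g x ((a \<circ> \<tau>) x))"
      using sg a by simp
  next
    fix b assume b: "b \<in> {s. s permutes S}"
    show "b \<circ> \<tau> \<circ> \<tau> = b" by (simp add: o_assoc[symmetric] \<tau>_def)
    show "b \<circ> \<tau> \<in> {s. s permutes S}" using b tp by (simp add: permutes_compose)
  qed
  then show ?thesis unfolding 1 by (simp add: sum_negf)
qed



lemma cc_idem: "cc n a * cc n a = cc n a"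
  by (simp add: cc_def)

lemma sum_cc_if: "(\<Sum>\<alpha>\<in>{1..2*n}. cc n \<alpha> * f \<alpha>) = (\<Sum>\<alpha>\<in>{1..n}. f \<alpha>)"
proof -
  have "(\<Sum>\<alpha>\<in>{1..2*n}. cc n \<alpha> * f \<alpha>) = (\<Sum>\<alpha>\<in>{1..2*n}. if \<alpha> \<le> n then f \<alpha> else 0)"
    by (intro sum.cong) (auto simp: cc_def)
  also have "\<dots> = sum f {\<alpha> \<in> {1..2*n}. \<alpha> \<le> n}"
    by (rule sum.inter_filter[symmetric]) simp
  also have "{\<alpha> \<in> {1..2*n}. \<alpha> \<le> n} = {1..n}" by auto
  finally show ?thesis .
qed

lemma sum_cc_Phi: "(\<Sum>\<alpha>\<in>{1..2*n}. cc n \<alpha> * (U j \<alpha> * cnj (U l \<alpha>))) = Phi n j l U"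
  unfolding sum_cc_if Phi_def ..

lemma sum_cc: "(\<Sum>\<alpha>\<in>{1..2*n}. cc n \<alpha>) = of_nat n"
  using sum_cc_if[of n "\<lambda>_. 1"] by simp

lemma unit0:
  assumes "unitary_mat (2*n) U" "j \<in> {1..2*n}" "l \<in> {1..2*n}" "j \<noteq> l"
  shows "(\<Sum>\<alpha>\<in>{1..2*n}. U j \<alpha> * cnj (U l \<alpha>)) = 0"
  using assms unfolding unitary_mat_def by auto

lemma X1_sum:
  assumes "unitary_mat (2*n) U" "j \<in> {1..2*n}" "l \<in> {1..2*n}" "j \<noteq> l"
  shows "(\<Sum>\<alpha>\<in>{1..2*n}. \<Sum>\<beta>\<in>{1..2*n}. (cc n \<alpha> - cc n \<beta>) *
            (U j \<alpha> * cnj (U l \<alpha>) - U j \<beta> * cnj (U l \<beta>)) * R)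
       = 4 * of_nat n * Phi n j l U * R"
proof -
  have "(\<Sum>\<alpha>\<in>{1..2*n}. \<Sum>\<beta>\<in>{1..2*n}. (cc n \<alpha> - cc n \<beta>) *
            (U j \<alpha> * cnj (U l \<alpha>) - U j \<beta> * cnj (U l \<beta>)) * R)
     = (\<Sum>\<alpha>\<in>{1..2*n}. \<Sum>\<beta>\<in>{1..2*n}. (cc n \<alpha> - cc n \<beta>) *
            (U j \<alpha> * cnj (U l \<alpha>) - U j \<beta> * cnj (U l \<beta>))) * R"
    by (simp only: sum_distrib_right)
  also have "\<dots> = (2 * of_nat (card {1..2*n}) * Phi n j l U - 2 * of_nat n * 0) * R"
    by (subst L1) (simp only: sum_cc_Phi sum_cc unit0[OF assms])
  finally show ?thesis by simp
qed

lemma X2_sum: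
  assumes "unitary_mat (2*n) U" "j \<in> {1..2*n}" "l \<in> {1..2*n}" "j' \<in> {1..2*n}" "l' \<in> {1..2*n}"
    "j' \<noteq> l" "j \<noteq> l'"
  shows "(\<Sum>\<alpha>\<in>{1..2*n}. \<Sum>\<beta>\<in>{1..2*n}. ((cc n \<alpha> - cc n \<beta>) * (U j \<beta> * cnj (U l \<alpha>))) *
            (((cc n \<beta> - cc n \<alpha>) * (U j' \<alpha> * cnj (U l' \<beta>))) * R))
       = 2 * Phi n j' l U * Phi n j l' U * R"
proof -
  have "(\<Sum>\<alpha>\<in>{1..2*n}. \<Sum>\<beta>\<in>{1..2*n}. ((cc n \<alpha> - cc n \<beta>) * (U j \<beta> * cnj (U l \<alpha>))) *
            (((cc n \<beta> - cc n \<alpha>) * (U j' \<alpha> * cnj (U l' \<beta>))) * R))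
     = (\<Sum>\<alpha>\<in>{1..2*n}. \<Sum>\<beta>\<in>{1..2*n}. (cc n \<alpha> - cc n \<beta>) * (cc n \<beta> - cc n \<alpha>) *
            ((U j' \<alpha> * cnj (U l \<alpha>)) * (U j \<beta> * cnj (U l' \<beta>)))) * R"
    by (simp only: sum_distrib_right) (intro sum.cong refl, simp only: ac_simps)
  also have "\<dots> = (2 * Phi n j' l U * Phi n j l' U - Phi n j' l U * 0 - 0 * Phi n j l' U) * R"
    apply (subst L2[OF cc_idem])
    apply (simp only: sum_cc_Phi)
    apply (simp only: unit0[OF assms(1,4,3,6)] unit0[OF assms(1,2,5,7)])
    done
  finally show ?thesis by simp
qed



lemma S4:
  "(\<Sum>\<alpha>\<in>N. \<Sum>\<beta>\<in>N. \<Sum>s\<in>P. \<Sum>m\<in>Q. F \<alpha> \<beta> s m) = (\<Sum>s\<in>P. \<Sum>m\<in>Q. \<Sum>\<alpha>\<in>N. \<Sum>\<beta>\<in>N. F \<alpha> \<beta> s m)"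
proof -
  have "(\<Sum>\<alpha>\<in>N. \<Sum>\<beta>\<in>N. \<Sum>s\<in>P. \<Sum>m\<in>Q. F \<alpha> \<beta> s m) = (\<Sum>\<alpha>\<in>N. \<Sum>s\<in>P. \<Sum>\<beta>\<in>N. \<Sum>m\<in>Q. F \<alpha> \<beta> s m)"
    by (rule sum.cong[OF refl], rule sum.swap)
  also have "\<dots> = (\<Sum>s\<in>P. \<Sum>\<alpha>\<in>N. \<Sum>\<beta>\<in>N. \<Sum>m\<in>Q. F \<alpha> \<beta> s m)" by (rule sum.swap)
  also have "\<dots> = (\<Sum>s\<in>P. \<Sum>\<alpha>\<in>N. \<Sum>m\<in>Q. \<Sum>\<beta>\<in>N. F \<alpha> \<beta> s m)"
    by (intro sum.cong refl, rule sum.swap)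
  also have "\<dots> = (\<Sum>s\<in>P. \<Sum>m\<in>Q. \<Sum>\<alpha>\<in>N. \<Sum>\<beta>\<in>N. F \<alpha> \<beta> s m)"
    by (intro sum.cong refl, rule sum.swap)
  finally show ?thesis .
qed

lemma S3:
  "(\<Sum>\<alpha>\<in>N. \<Sum>\<beta>\<in>N. \<Sum>m\<in>Q. F \<alpha> \<beta> m) = (\<Sum>m\<in>Q. \<Sum>\<alpha>\<in>N. \<Sum>\<beta>\<in>N. F \<alpha> \<beta> m)"
proof -
  have "(\<Sum>\<alpha>\<in>N. \<Sum>\<beta>\<in>N. \<Sum>m\<in>Q. F \<alpha> \<beta> m) = (\<Sum>\<alpha>\<in>N. \<Sum>m\<in>Q. \<Sum>\<beta>\<in>N. F \<alpha> \<beta> m)"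
    by (rule sum.cong[OF refl], rule sum.swap)
  also have "\<dots> = (\<Sum>m\<in>Q. \<Sum>\<alpha>\<in>N. \<Sum>\<beta>\<in>N. F \<alpha> \<beta> m)" by (rule sum.swap)
  finally show ?thesis .
qed

lemma S_inner:
  fixes f g :: "nat \<Rightarrow> nat \<Rightarrow> complex"
  shows "(\<Sum>\<alpha>\<in>N. \<Sum>\<beta>\<in>N. a * (f \<alpha> \<beta> + g \<alpha> \<beta> * (\<Sum>m'\<in>Q. h \<alpha> \<beta> m')))
     = a * ((\<Sum>\<alpha>\<in>N. \<Sum>\<beta>\<in>N. f \<alpha> \<beta>) + (\<Sum>m'\<in>Q. \<Sum>\<alpha>\<in>N. \<Sum>\<beta>\<in>N. g \<alpha> \<beta> * h \<alpha> \<beta> m'))"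
proof -
  have "(\<Sum>\<alpha>\<in>N. \<Sum>\<beta>\<in>N. a * (f \<alpha> \<beta> + g \<alpha> \<beta> * (\<Sum>m'\<in>Q. h \<alpha> \<beta> m')))
     = a * ((\<Sum>\<alpha>\<in>N. \<Sum>\<beta>\<in>N. f \<alpha> \<beta>) + (\<Sum>\<alpha>\<in>N. \<Sum>\<beta>\<in>N. \<Sum>m'\<in>Q. g \<alpha> \<beta> * h \<alpha> \<beta> m'))"
    by (simp only: sum_distrib_left sum.distrib distrib_left)
  also have "\<dots> = a * ((\<Sum>\<alpha>\<in>N. \<Sum>\<beta>\<in>N. f \<alpha> \<beta>) + (\<Sum>m'\<in>Q. \<Sum>\<alpha>\<in>N. \<Sum>\<beta>\<in>N. g \<alpha> \<beta> * h \<alpha> \<beta> m'))"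
    by (simp only: S3)
  finally show ?thesis .
qed

theorem theorem3p7:
  fixes n k :: nat and U :: cmat
  assumes "1 \<le> n" and "1 \<le> k" and "k \<le> n"
    and "unitary_mat (2*n) U"
  shows "Omega n (Fk n k) U
           = of_int (4 * int n * int k - 2 * int k * (int k - 1)) * Fk n k U"
proof -
  define N where "N = {1..2*n}"
  define O' where "O' = oddset k"
  define P where "P = {s. s permutes O'}"
  define ph where "ph = (\<lambda>x y. Phi n x (y + 1) U)"
  have finO: "finite O'" unfolding O'_def by simp
  have cardO: "card O' = k" unfolding O'_def by (rule card_oddset)
  have FU: "Fk n k U = (\<Sum>s\<in>P. of_int (sign s) * (\<Prod>x\<in>O'. ph x (s x)))"
    unfolding Fk_def P_def O'_def ph_def ..
  have rng: "m \<in> N" "s m + 1 \<in> N" "m \<noteq> s m' + 1" if "s \<in> P" "m \<in> O'" "m' \<in> O'" for s m m'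
  proof -
    show "m \<in> N" "s m + 1 \<in> N" using perm_range[of s k m n] that assms(3) unfolding P_def O'_def N_def by auto
    have "odd m" "even (s m' + 1)" using perm_range[of s k _ n] that assms(3) unfolding P_def O'_def by auto
    then show "m \<noteq> s m' + 1" by auto
  qed
  have "Omega n (Fk n k) U = (\<Sum>\<alpha>\<in>N. \<Sum>\<beta>\<in>N. Eop n \<alpha> \<beta> (Eop n \<beta> \<alpha> (Fk n k)) U)"
    unfolding Omega_def Hop_def N_def
    using omega_sum[of "\<lambda>\<alpha> \<beta>. Eop n \<alpha> \<beta> (Eop n \<beta> \<alpha> (Fk n k)) U" "2*n"] by simp
  also have "\<dots> = (\<Sum>\<alpha>\<in>N. \<Sum>\<beta>\<in>N. \<Sum>s\<in>P. \<Sum>m\<in>O'. of_int (sign s) *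
        ((cc n \<alpha> - cc n \<beta>) * (U m \<alpha> * cnj (U (s m + 1) \<alpha>) - U m \<beta> * cnj (U (s m + 1) \<beta>)) *
          (\<Prod>j\<in>O' - {m}. Phi n j (s j + 1) U)
      + ((cc n \<alpha> - cc n \<beta>) * (U m \<beta> * cnj (U (s m + 1) \<alpha>))) *
          (\<Sum>m'\<in>O' - {m}. ((cc n \<beta> - cc n \<alpha>) * (U m' \<alpha> * cnj (U (s m' + 1) \<beta>))) *
             (\<Prod>j\<in>O' - {m} - {m'}. Phi n j (s j + 1) U))))"
    apply (intro sum.cong refl)
    apply (subst E2)
    using assms(3) by (auto simp: N_def P_def O'_def sum_distrib_left)
  also have "\<dots> = (\<Sum>s\<in>P. \<Sum>m\<in>O'. of_int (sign s) *
       ((\<Sum>\<alpha>\<in>N. \<Sum>\<beta>\<in>N. (cc n \<alpha> - cc n \<beta>) * (U m \<alpha> * cnj (U (s m + 1) \<alpha>) - U m \<beta> * cnj (U (s m + 1) \<beta>)) *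
          (\<Prod>j\<in>O' - {m}. Phi n j (s j + 1) U))
       + (\<Sum>m'\<in>O' - {m}. \<Sum>\<alpha>\<in>N. \<Sum>\<beta>\<in>N. ((cc n \<alpha> - cc n \<beta>) * (U m \<beta> * cnj (U (s m + 1) \<alpha>))) *
          (((cc n \<beta> - cc n \<alpha>) * (U m' \<alpha> * cnj (U (s m' + 1) \<beta>))) *
             (\<Prod>j\<in>O' - {m} - {m'}. Phi n j (s j + 1) U)))))"
    by (simp only: S4 S_inner)
  also have "\<dots> = (\<Sum>s\<in>P. \<Sum>m\<in>O'. of_int (sign s) *
       (4 * of_nat n * ph m (s m) * (\<Prod>j\<in>O' - {m}. ph j (s j))
       + (\<Sum>m'\<in>O' - {m}. 2 * ph m' (s m) * ph m (s m') * (\<Prod>j\<in>O' - {m} - {m'}. ph j (s j)))))"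
  proof (intro sum.cong refl arg_cong[where f="\<lambda>x. _ * x"] arg_cong2[where f="(+)"])
    fix s m assume s: "s \<in> P" and m: "m \<in> O'"
    show "(\<Sum>\<alpha>\<in>N. \<Sum>\<beta>\<in>N. (cc n \<alpha> - cc n \<beta>) * (U m \<alpha> * cnj (U (s m + 1) \<alpha>) - U m \<beta> * cnj (U (s m + 1) \<beta>)) *
          (\<Prod>j\<in>O' - {m}. Phi n j (s j + 1) U)) = 4 * of_nat n * ph m (s m) * (\<Prod>j\<in>O' - {m}. ph j (s j))"
      unfolding N_def ph_def using rng[OF s m m] assms(4) by (subst X1_sum) (auto simp: N_def)
    fix m' assume m': "m' \<in> O' - {m}"
    have m'O: "m' \<in> O'" using m' by simp
    show "(\<Sum>\<alpha>\<in>N. \<Sum>\<beta>\<in>N. ((cc n \<alpha> - cc n \<beta>) * (U m \<beta> * cnj (U (s m + 1) \<alpha>))) *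
          (((cc n \<beta> - cc n \<alpha>) * (U m' \<alpha> * cnj (U (s m' + 1) \<beta>))) *
             (\<Prod>j\<in>O' - {m} - {m'}. Phi n j (s j + 1) U)))
        = 2 * ph m' (s m) * ph m (s m') * (\<Prod>j\<in>O' - {m} - {m'}. ph j (s j))"
      unfolding N_def ph_def using rng[OF s m m] rng[OF s m m'O] rng[OF s m'O m] rng[OF s m'O m'O] assms(4)
      by (subst X2_sum) (auto simp: N_def)
  qed
  also have "\<dots> = (\<Sum>s\<in>P. of_int (sign s) * (4 * of_nat n * of_nat k * (\<Prod>x\<in>O'. ph x (s x))))
      + (\<Sum>m\<in>O'. \<Sum>m'\<in>O' - {m}. 2 * (\<Sum>s\<in>P. of_int (sign s) * (ph m' (s m) * ph m (s m') * (\<Prod>j\<in>O' - {m} - {m'}. ph j (s j)))))"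
  proof -
    have a: "(\<Sum>m\<in>O'. 4 * of_nat n * ph m (s m) * (\<Prod>j\<in>O' - {m}. ph j (s j)))
        = 4 * of_nat n * of_nat k * (\<Prod>x\<in>O'. ph x (s x))" for s
    proof -
      have "(\<Sum>m\<in>O'. 4 * of_nat n * ph m (s m) * (\<Prod>j\<in>O' - {m}. ph j (s j)))
          = (\<Sum>m\<in>O'. 4 * of_nat n * (\<Prod>x\<in>O'. ph x (s x)))"
        by (intro sum.cong refl) (simp add: prod.remove[OF finO] mult.assoc)
      then show ?thesis using cardO by simp
    qed
    have "(\<Sum>s\<in>P. \<Sum>m\<in>O'. of_int (sign s) *
       (4 * of_nat n * ph m (s m) * (\<Prod>j\<in>O' - {m}. ph j (s j))
       + (\<Sum>m'\<in>O' - {m}. 2 * ph m' (s m) * ph m (s m') * (\<Prod>j\<in>O' - {m} - {m'}. ph j (s j)))))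
      = (\<Sum>s\<in>P. of_int (sign s) * (\<Sum>m\<in>O'. 4 * of_nat n * ph m (s m) * (\<Prod>j\<in>O' - {m}. ph j (s j))))
      + (\<Sum>s\<in>P. \<Sum>m\<in>O'. \<Sum>m'\<in>O' - {m}. 2 * (of_int (sign s) * (ph m' (s m) * ph m (s m') * (\<Prod>j\<in>O' - {m} - {m'}. ph j (s j)))))"
      by (simp add: sum.distrib sum_distrib_left algebra_simps)
    also have "(\<Sum>s\<in>P. \<Sum>m\<in>O'. \<Sum>m'\<in>O' - {m}. 2 * (of_int (sign s) * (ph m' (s m) * ph m (s m') * (\<Prod>j\<in>O' - {m} - {m'}. ph j (s j)))))
      = (\<Sum>m\<in>O'. \<Sum>m'\<in>O' - {m}. \<Sum>s\<in>P. 2 * (of_int (sign s) * (ph m' (s m) * ph m (s m') * (\<Prod>j\<in>O' - {m} - {m'}. ph j (s j)))))"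
      apply (subst sum.swap)
      apply (intro sum.cong refl)
      apply (rule sum.swap)
      done
    finally show ?thesis unfolding a by (simp add: sum_distrib_left)
  qed
  also have "\<dots> = 4 * of_nat n * of_nat k * Fk n k U + (\<Sum>m\<in>O'. \<Sum>m'\<in>O' - {m}. 2 * (- Fk n k U))"
  proof -
    have "(\<Sum>m\<in>O'. \<Sum>m'\<in>O' - {m}. 2 * (\<Sum>s\<in>P. of_int (sign s) * (ph m' (s m) * ph m (s m') * (\<Prod>j\<in>O' - {m} - {m'}. ph j (s j)))))
        = (\<Sum>m\<in>O'. \<Sum>m'\<in>O' - {m}. 2 * (- Fk n k U))"
      unfolding FU P_def
      by (intro sum.cong refl arg_cong[where f="\<lambda>x. 2 * x"] perm_swap_sum[OF finO]) auto
    then show ?thesis unfolding FU by (simp add: sum_distrib_left algebra_simps)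
  qed
  also have "\<dots> = (4 * of_nat n * of_nat k - 2 * of_nat k * (of_nat k - 1)) * Fk n k U"
    using cardO finO assms(2) by (simp add: algebra_simps of_nat_diff)
  also have "\<dots> = of_int (4 * int n * int k - 2 * int k * (int k - 1)) * Fk n k U"
    by simp
  finally show ?thesis .
qed

end
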